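(* Let $n\ge2$, let $P$ be a partial $n$-Metric on a set $X$, and let $\{x_i\}_{i\in\mathbb{N}}$ be a Cauchy sequence in $X$ with special limit $a\in X$. Then for every integer $0\le q\le n-1$, all $b_1,\dots,b_q\in X$ and every $\epsilon>0$ there exists $N\in\mathbb{N}$ such that for all $i_1,\dots,i_{n-q}>N$, $$P(\langle a\rangle^{n-q},b_1,\dots,b_q)-\epsilon<P(x_{i_1},\dots,x_{i_{n-q}},b_1,\dots,b_q)<P(\langle a\rangle^{n-q},b_1,\dots,b_q)+\epsilon.$$
   Context: Notation: $\langle a\rangle^k$ denotes the $k$-tuple $(a,\dots,a)$ inserted into an argument list. A partial $n$-Metric on $X$ is a function $P:X^n\to\mathbb{R}$ such that for all $x_1,\dots,x_n,a\in X$: (1) $P(\langle x_1\rangle^n)\le P(\langle x_1\rangle^{n-1},x_2)$; (2) $P$ is invariant under permutations of its arguments; (3) $P(\langle x_1\rangle^{n-1},x_2)=P(\langle x_1\rangle^n)$ and $P(\langle x_2\rangle^{n-1},x_1)=P(\langle x_2\rangle^n)$ iff $x_1=x_2$; (4) $P(x_1,\dots,x_n)\le P(x_1,\dots,x_{n-1},a)+P(\langle a\rangle^{n-1},x_n)-P(\langle a\rangle^n)$. A point $a$ is a limit of $\{x_i\}$ iff for every $\epsilon>0$ there is $N$ with $P(\langle a\rangle^{n-1},x_i)-P(\langle a\rangle^n)<\epsilon$ for all $i>N$ (convergence in the topology generated by the balls $\{y\mid P(\langle x\rangle^{n-1},y)-P(\langle x\rangle^n)<\epsilon\}$). $\{x_i\}$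 is Cauchy with central distance $r\in\mathbb{R}$ if for every $\epsilon>0$ there is $N$ such that $|P(x_{i_1},\dots,x_{i_n})-r|<\epsilon$ for all $i_1,\dots,i_n>N$. A special limit of such a sequence is a limit $a$ with $P(\langle a\rangle^n)=r$. *)

theory Defs
  imports "HOL-Library.Multiset" Complex_Main
begin

text \<open>An n-ary function P on X is modelled as a function on lists; only lists of
  length n with entries in X are relevant.  The tuple (x_1,...,x_n) is the list [x_1,...,x_n],
  and the tuple with k copies of a is replicate k a.\<close>

definition partial_n_metric :: "nat \<Rightarrow> 'a set \<Rightarrow> ('a list \<Rightarrow> real) \<Rightarrow> bool" where
  "partial_n_metric n X P \<longleftrightarrow>
     (\<forall>x1\<in>X. \<forall>x2\<in>X. P (replicate n x1) \<le> P (replicate (n - 1) x1 @ [x2])) \<and>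
     (\<forall>xs ys. length xs = n \<and> set xs \<subseteq> X \<and> mset ys = mset xs \<longrightarrow> P ys = P xs) \<and>
     (\<forall>x1\<in>X. \<forall>x2\<in>X.
        (P (replicate (n - 1) x1 @ [x2]) = P (replicate n x1) \<and>
         P (replicate (n - 1) x2 @ [x1]) = P (replicate n x2)) \<longleftrightarrow> x1 = x2) \<and>
     (\<forall>xs a xn. length xs = n - 1 \<and> set xs \<subseteq> X \<and> a \<in> X \<and> xn \<in> X \<longrightarrow>
        P (xs @ [xn]) \<le> P (xs @ [a]) + P (replicate (n - 1) a @ [xn]) - P (replicate n a))"

definition pnm_limit :: "nat \<Rightarrow> ('a list \<Rightarrow> real) \<Rightarrow> (nat \<Rightarrow> 'a) \<Rightarrow> 'a \<Rightarrow> bool" where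
  "pnm_limit n P x a \<longleftrightarrow>
     (\<forall>\<epsilon>>0. \<exists>N. \<forall>i>N. P (replicate (n - 1) a @ [x i]) - P (replicate n a) < \<epsilon>)"

definition pnm_cauchy :: "nat \<Rightarrow> ('a list \<Rightarrow> real) \<Rightarrow> (nat \<Rightarrow> 'a) \<Rightarrow> real \<Rightarrow> bool" where
  "pnm_cauchy n P x r \<longleftrightarrow>
     (\<forall>\<epsilon>>0. \<exists>N. \<forall>is. length is = n \<and> (\<forall>i\<in>set is. i > N) \<longrightarrow> \<bar>P (map x is) - r\<bar> < \<epsilon>)"

definition pnm_special_limit :: "nat \<Rightarrow> ('a list \<Rightarrow> real) \<Rightarrow> (nat \<Rightarrow> 'a) \<Rightarrow> real \<Rightarrow> 'a \<Rightarrow> bool" where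
  "pnm_special_limit n P x r a \<longleftrightarrow> pnm_limit n P x a \<and> P (replicate n a) = r"

end

theory Submission
  imports Defs
begin

lemma lemU:
  fixes P :: "'a list \<Rightarrow> real"
  assumes perm: "\<And>xs ys. length xs = n \<Longrightarrow> set xs \<subseteq> X \<Longrightarrow> mset ys = mset xs \<Longrightarrow> P ys = P xs"
    and tri: "\<And>xs c xn. length xs = n - 1 \<Longrightarrow> set xs \<subseteq> X \<Longrightarrow> c \<in> X \<Longrightarrow> xn \<in> X \<Longrightarrow>
        P (xs @ [xn]) \<le> P (xs @ [c]) + P (replicate (n - 1) c @ [xn]) - P (replicate n c)"
    and aX: "a \<in> X" and n1: "n \<ge> 1"
    and hi: "\<forall>i\<in>set is. x i \<in> X \<and> P (replicate (n - 1) a @ [x i]) - P (replicate n a) \<le> d"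
    and cs: "set cs \<subseteq> X" "length is + length cs = n"
  shows "P (map x is @ cs) \<le> P (replicate (length is) a @ cs) + real (length is) * d"
  using hi cs
proof (induction "is" arbitrary: cs)
  case Nil then show ?case by simp
next
  case (Cons i js)
  let ?L = "map x js @ cs"
  have xi: "x i \<in> X" and di: "P (replicate (n - 1) a @ [x i]) - P (replicate n a) \<le> d"
    using Cons.prems by auto
  have LX: "set ?L \<subseteq> X" using Cons.prems by auto
  have lenL: "length ?L = n - 1" using Cons.prems by auto
  have e1: "P (map x (i # js) @ cs) = P (?L @ [x i])"
    by (rule perm) (use Cons.prems LX xi in auto)
  have e2: "P (?L @ [x i]) \<le> P (?L @ [a]) + d"
    using tri[OF lenL LX aX xi] di by linarith
  have IH: "P (map x js @ (cs @ [a])) \<le> P (replicate (length js) a @ (cs @ [a])) + real (length js) * d"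
    by (rule Cons.IH) (use Cons.prems aX in auto)
  have e3: "P (replicate (length js) a @ (cs @ [a])) = P (replicate (length (i # js)) a @ cs)"
    by (rule perm) (use Cons.prems aX in auto)
  show ?case using e1 e2 IH e3 by (simp add: algebra_simps)
qed

lemma lemL:
  fixes P :: "'a list \<Rightarrow> real"
  assumes perm: "\<And>xs ys. length xs = n \<Longrightarrow> set xs \<subseteq> X \<Longrightarrow> mset ys = mset xs \<Longrightarrow> P ys = P xs"
    and tri: "\<And>xs c xn. length xs = n - 1 \<Longrightarrow> set xs \<subseteq> X \<Longrightarrow> c \<in> X \<Longrightarrow> xn \<in> X \<Longrightarrow>
        P (xs @ [xn]) \<le> P (xs @ [c]) + P (replicate (n - 1) c @ [xn]) - P (replicate n c)"
    and aX: "a \<in> X" and n1: "n \<ge> 1"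
    and hi: "\<forall>i\<in>set is. x i \<in> X \<and> P (replicate (n - 1) (x i) @ [a]) - P (replicate n (x i)) \<le> e"
    and cs: "set cs \<subseteq> X" "length is + length cs = n"
  shows "P (replicate (length is) a @ cs) \<le> P (map x is @ cs) + real (length is) * e"
  using hi cs
proof (induction "is" arbitrary: cs)
  case Nil then show ?case by simp
next
  case (Cons i js)
  let ?M = "replicate (length js) a @ cs"
  have xi: "x i \<in> X" and di: "P (replicate (n - 1) (x i) @ [a]) - P (replicate n (x i)) \<le> e"
    using Cons.prems by auto
  have MX: "set ?M \<subseteq> X" using Cons.prems aX by auto
  have lenM: "length ?M = n - 1" using Cons.prems by auto
  have e1: "P (replicate (length (i # js)) a @ cs) = P (?M @ [a])"
    by (rule perm) (use Cons.prems aX in auto)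
  have e2: "P (?M @ [a]) \<le> P (?M @ [x i]) + e"
    using tri[OF lenM MX xi aX] di by linarith
  have IH: "P (replicate (length js) a @ (cs @ [x i])) \<le> P (map x js @ (cs @ [x i])) + real (length js) * e"
    by (rule Cons.IH) (use Cons.prems xi in auto)
  have e3: "P (map x js @ (cs @ [x i])) = P (map x (i # js) @ cs)"
    by (rule perm) (use Cons.prems xi in auto)
  show ?case using e1 e2 IH e3 by (simp add: algebra_simps)
qed

theorem theorem4p16:
  fixes n :: nat and X :: "'a set" and P :: "'a list \<Rightarrow> real"
    and x :: "nat \<Rightarrow> 'a" and a :: 'a and r :: real
  assumes "n \<ge> 2"
    and "partial_n_metric n X P"
    and "\<forall>i. x i \<in> X"
    and "a \<in> X"
    and "pnm_cauchy n P x r"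
    and "pnm_special_limit n P x r a"
  shows "\<forall>q. q \<le> n - 1 \<longrightarrow> (\<forall>bs. length bs = q \<and> set bs \<subseteq> X \<longrightarrow>
           (\<forall>\<epsilon>>0. \<exists>N::nat. \<forall>is. length is = n - q \<and> (\<forall>i\<in>set is. i > N) \<longrightarrow>
              P (replicate (n - q) a @ bs) - \<epsilon> < P (map x is @ bs) \<and>
              P (map x is @ bs) < P (replicate (n - q) a @ bs) + \<epsilon>))"
proof (intro allI impI, elim conjE)
  fix q :: nat and bs :: "'a list" and \<epsilon> :: real
  assume q: "q \<le> n - 1" and lbs: "length bs = q" and bsX: "set bs \<subseteq> X" and ep: "\<epsilon> > 0"
  have n1: "n \<ge> 1" using assms(1) by simp
  have perm: "\<And>xs ys. length xs = n \<Longrightarrow> set xs \<subseteq> X \<Longrightarrow> mset ys = mset xs \<Longrightarrow> P ys = P xs"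
    using assms(2) unfolding partial_n_metric_def by blast
  have tri: "\<And>xs c xn. length xs = n - 1 \<Longrightarrow> set xs \<subseteq> X \<Longrightarrow> c \<in> X \<Longrightarrow> xn \<in> X \<Longrightarrow>
        P (xs @ [xn]) \<le> P (xs @ [c]) + P (replicate (n - 1) c @ [xn]) - P (replicate n c)"
    using assms(2) unfolding partial_n_metric_def by blast
  define e' where "e' = \<epsilon> / (real n * real n + 1)"
  have npos: "real n * real n + 1 > 0" by (smt (verit) zero_le_mult_iff of_nat_0_le_iff)
  have e'pos: "e' > 0" unfolding e'_def using ep npos by simp
  have rA: "P (replicate n a) = r" using assms(6) unfolding pnm_special_limit_def by simp
  obtain N1 where N1: "\<forall>i>N1. P (replicate (n - 1) a @ [x i]) - P (replicate n a) < e'"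
    using assms(6) e'pos unfolding pnm_special_limit_def pnm_limit_def by blast
  obtain N2 where N2: "\<forall>is. length is = n \<and> (\<forall>i\<in>set is. i > N2) \<longrightarrow> \<bar>P (map x is) - r\<bar> < e'"
    using assms(5) e'pos unfolding pnm_cauchy_def by blast
  define N where "N = max N1 N2"
  have dlt: "\<And>i. i > N \<Longrightarrow> P (replicate (n - 1) a @ [x i]) - P (replicate n a) \<le> e'"
    using N1 unfolding N_def by (simp add: less_imp_le)
  have eta: "P (replicate (n - 1) (x i) @ [a]) - P (replicate n (x i)) \<le> real n * e'" if iN: "i > N" for i
  proof -
    have "P (map x (replicate (n - 1) i) @ [a]) \<le> P (replicate (length (replicate (n - 1) i)) a @ [a])
          + real (length (replicate (n - 1) i)) * e'"
      by (rule lemU[OF perm tri assms(4) n1]) (use assms(3,4) dlt iN n1 in auto)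
    also have "replicate (length (replicate (n - 1) i)) a @ [a] = replicate n a"
      using n1 by (cases n) (simp_all add: replicate_append_same)
    finally have u: "P (replicate (n - 1) (x i) @ [a]) \<le> r + real (n - 1) * e'"
      using rA by (simp add: map_replicate)
    have "\<bar>P (map x (replicate n i)) - r\<bar> < e'"
      using N2[rule_format, of "replicate n i"] iN unfolding N_def by auto
    hence c: "P (replicate n (x i)) > r - e'" by (simp add: map_replicate)
    have "real (n - 1) = real n - 1" using n1 by simp
    thus ?thesis using u c by (simp add: algebra_simps)
  qed
  show "\<exists>N::nat. \<forall>is. length is = n - q \<and> (\<forall>i\<in>set is. i > N) \<longrightarrow>
              P (replicate (n - q) a @ bs) - \<epsilon> < P (map x is @ bs) \<and>
              P (map x is @ bs) < P (replicate (n - q) a @ bs) + \<epsilon>"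
  proof (intro exI allI impI, elim conjE)
    fix "is" :: "nat list"
    assume li: "length is = n - q" and iN: "\<forall>i\<in>set is. i > N"
    have len: "length is + length bs = n" using li lbs q by simp
    have U: "P (map x is @ bs) \<le> P (replicate (length is) a @ bs) + real (length is) * e'"
      by (rule lemU[OF perm tri assms(4) n1]) (use assms(3) dlt iN bsX len in auto)
    have L: "P (replicate (length is) a @ bs) \<le> P (map x is @ bs) + real (length is) * (real n * e')"
      by (rule lemL[OF perm tri assms(4) n1]) (use assms(3) eta iN bsX len in auto)
    have mle: "real (length is) \<le> real n" using len by simp
    have b1: "real (length is) * e' \<le> real n * e'" using mle e'pos by (simp add: mult_right_mono)
    have b2: "real (length is) * (real n * e') \<le> real n * (real n * e')"
      using mle e'pos by (simp add: mult_right_mono)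
    have b3: "real n * (real n * e') < \<epsilon>"
    proof -
      have "real n * (real n * e') = \<epsilon> * (real n * real n) / (real n * real n + 1)"
        unfolding e'_def by (simp add: field_simps)
      also have "\<dots> < \<epsilon>" using ep npos by (simp add: field_simps)
      finally show ?thesis .
    qed
    have b4: "real n * e' \<le> real n * (real n * e')"
    proof -
      have "1 * (real n * e') \<le> real n * (real n * e')"
        using n1 e'pos by (intro mult_right_mono) auto
      thus ?thesis by simp
    qed
    show "P (replicate (n - q) a @ bs) - \<epsilon> < P (map x is @ bs) \<and>
          P (map x is @ bs) < P (replicate (n - q) a @ bs) + \<epsilon>"
      using U L b1 b2 b3 b4 unfolding li by linarith
  qed
qed

end
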